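(* Let $k\geq 2$ and $p\geq 1$ be integers and let $\sigma$ be a multiset of $k+p$ real numbers. Then $\sigma$ is the spectrum of a matrix in $\mathcal{S}(L_{k,p})$ if and only if $\sigma$ contains at least $p+2$ distinct elements.
   Context: The $(k,p)$-lollipop graph $L_{k,p}$ is the graph on $k+p$ vertices obtained from the disjoint union of a complete graph $K_k$ and a path $P_p$ on $p$ vertices by adding an edge between a vertex of $K_k$ and a leaf (endpoint) of $P_p$. For a simple graph $G$ on $n$ vertices, $\mathcal{S}(G)$ is the set of all $n\times n$ real symmetric matrices $A=(a_{ij})$ such that for $i\neq j$, $a_{ij}\neq 0$ if and only if $\{i,j\}$ is an edge of $G$ (diagonal entries unrestricted). *)

theory Defs
  imports "Jordan_Normal_Form.Char_Poly" "HOL-Library.Multiset"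
begin

text \<open>The lollipop graph L_{k,p}: vertices 0..k-1 form the clique K_k, vertices k..k+p-1 form
  the path P_p (consecutive vertices adjacent), and the clique vertex k-1 is joined to the
  path leaf k.\<close>

definition lollipop_edge :: "nat \<Rightarrow> nat \<Rightarrow> nat \<Rightarrow> nat \<Rightarrow> bool" where
  "lollipop_edge k p i j \<longleftrightarrow> i < k + p \<and> j < k + p \<and> i \<noteq> j \<and>
     ((i < k \<and> j < k) \<or>
      (k \<le> i \<and> k \<le> j \<and> (j = i + 1 \<or> i = j + 1)) \<or>
      (i = k - 1 \<and> j = k) \<or> (i = k \<and> j = k - 1))"

definition sym_pattern :: "nat \<Rightarrow> (nat \<Rightarrow> nat \<Rightarrow> bool) \<Rightarrow> real mat set" where
  "sym_pattern n E = {A. A \<in> carrier_mat n n \<and> transpose_mat A = A \<and>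
     (\<forall>i<n. \<forall>j<n. i \<noteq> j \<longrightarrow> (A $$ (i, j) \<noteq> 0 \<longleftrightarrow> E i j))}"

definition is_spectrum :: "real multiset \<Rightarrow> real mat \<Rightarrow> bool" where
  "is_spectrum \<sigma> A \<longleftrightarrow> char_poly A = (\<Prod>a\<in>#\<sigma>. [:- a, 1:])"

end

theory Submission imports Defs "Jordan_Normal_Form.Schur_Decomposition" begin

definition ipr :: "(nat \<Rightarrow> real) \<Rightarrow> real list \<Rightarrow> real poly \<Rightarrow> real poly \<Rightarrow> real" where
  "ipr w ls f g = (\<Sum>i<length ls. w i * poly f (ls!i) * poly g (ls!i))"

definition aco :: "(nat \<Rightarrow> real) \<Rightarrow> real list \<Rightarrow> real poly \<Rightarrow> real" where
  "aco w ls f = ipr w ls ([:0,1:] * f) f / ipr w ls f f"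

definition bco :: "(nat \<Rightarrow> real) \<Rightarrow> real list \<Rightarrow> real poly \<Rightarrow> real poly \<Rightarrow> real" where
  "bco w ls f g = ipr w ls g g / ipr w ls f f"

fun OP :: "(nat \<Rightarrow> real) \<Rightarrow> real list \<Rightarrow> nat \<Rightarrow> real poly" where
  "OP w ls 0 = 1"
| "OP w ls (Suc 0) = [:- aco w ls 1, 1:]"
| "OP w ls (Suc (Suc j)) = [:- aco w ls (OP w ls (Suc j)), 1:] * OP w ls (Suc j)
      - Polynomial.smult (bco w ls (OP w ls j) (OP w ls (Suc j))) (OP w ls j)"

lemma ipr_sym: "ipr w ls f g = ipr w ls g f"
  unfolding ipr_def by (simp add: algebra_simps)

lemma ipr_add2: "ipr w ls f (g + h) = ipr w ls f g + ipr w ls f h"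
  unfolding ipr_def by (simp add: algebra_simps sum.distrib)

lemma ipr_diff2: "ipr w ls f (g - h) = ipr w ls f g - ipr w ls f h"
  unfolding ipr_def by (simp add: algebra_simps sum_subtractf)

lemma ipr_smult2: "ipr w ls f (Polynomial.smult c g) = c * ipr w ls f g"
  unfolding ipr_def by (simp add: algebra_simps sum_distrib_left)

lemma ipr_zero2[simp]: "ipr w ls f 0 = 0"
  unfolding ipr_def by simp

lemma ipr_x: "ipr w ls ([:0,1:] * f) g = ipr w ls f ([:0,1:] * g)"
  unfolding ipr_def by (simp add: algebra_simps)

lemma ipr_step:
  "ipr w ls ([:- a, 1:] * g - Polynomial.smult b h) q = ipr w ls g ([:0,1:] * q) - a * ipr w ls g q - b * ipr w ls h q"
  unfolding ipr_def by (simp add: algebra_simps sum_subtractf sum_distrib_left sum.distrib)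

lemma deg_drop: assumes "degree r \<le> d" "coeff r d = 0" shows "r = 0 \<or> degree r < d"
proof (rule ccontr)
  assume "\<not> (r = 0 \<or> degree r < d)"
  hence "r \<noteq> 0" "degree r = d" using assms by auto
  thus False using assms(2) by auto
qed

lemma OP_monic: "degree (OP w ls j) = j \<and> coeff (OP w ls j) j = 1"
proof (induction w ls j rule: OP.induct)
  case (1 w ls) then show ?case by simp
next
  case (2 w ls) then show ?case by simp
next
  case (3 w' ls' j)
  let ?g = "OP w' ls' (Suc j)" and ?h = "OP w' ls' j"
  let ?a = "aco w' ls' ?g" and ?b = "bco w' ls' ?h ?g"
  have dg: "degree ([:- ?a, 1:] * ?g) = Suc (Suc j)"
    using 3 by (subst degree_mult_eq) auto
  have cg: "coeff ([:- ?a, 1:] * ?g) (Suc (Suc j)) = 1"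
    using 3 dg by (metis lead_coeff_mult lead_coeff_pCons(1) mult_1 one_neq_zero pCons_one)
  have dh: "degree (Polynomial.smult ?b ?h) < Suc (Suc j)" using 3 by simp
  have "degree ([:- ?a, 1:] * ?g - Polynomial.smult ?b ?h) = Suc (Suc j)"
    using dg dh degree_add_eq_left[of "- Polynomial.smult ?b ?h" "[:- ?a, 1:] * ?g"] by simp
  moreover have "coeff ([:- ?a, 1:] * ?g - Polynomial.smult ?b ?h) (Suc (Suc j)) = 1"
  proof -
    have "coeff (Polynomial.smult ?b ?h) (Suc (Suc j)) = 0" using 3 by (simp add: coeff_eq_0)
    thus ?thesis using cg by simp
  qed
  ultimately show ?case by simp
qed


lemma prodlin_monic: "degree (\<Prod>x\<leftarrow>xs. [:- x, 1:]) = length xs \<and> coeff (\<Prod>x\<leftarrow>xs. [:- (x::real), 1:]) (length xs) = 1"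
proof (induction xs)
  case Nil then show ?case by simp
next
  case (Cons y xs)
  let ?R = "(\<Prod>x\<leftarrow>xs. [:- x, 1:])"
  have "degree ([:-y,1:] * ?R) = Suc (length xs)" using Cons by (subst degree_mult_eq) auto
  moreover have "coeff ([:-y,1:] * ?R) (Suc (length xs)) = 1"
    using Cons calculation by (metis lead_coeff_mult lead_coeff_pCons(1) mult_1 one_neq_zero pCons_one)
  ultimately show ?case by simp
qed

context
  fixes w :: "nat \<Rightarrow> real" and ls :: "real list"
  assumes wpos: "\<And>i. i < length ls \<Longrightarrow> w i > 0" and dist: "distinct ls"
begin

lemma ipr_self_nonneg: "ipr w ls f f \<ge> 0"
  unfolding ipr_def using wpos by (intro sum_nonneg) (simp add: mult.assoc less_imp_le)

lemma ipr_self_pos: assumes "f \<noteq> 0" "degree f < length ls" shows "ipr w ls f f > 0"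
proof (rule ccontr)
  assume "\<not> ipr w ls f f > 0"
  hence z: "(\<Sum>i<length ls. w i * poly f (ls!i) * poly f (ls!i)) = 0"
    using ipr_self_nonneg[of f] unfolding ipr_def by linarith
  have "\<forall>i\<in>{..<length ls}. w i * poly f (ls!i) * poly f (ls!i) = 0"
    using z wpos by (subst (asm) sum_nonneg_eq_0_iff) (auto simp: mult.assoc less_imp_le)
  hence "\<forall>i<length ls. poly f (ls!i) = 0" using wpos by (metis lessThan_iff mult_eq_0_iff order_less_irrefl)
  hence r: "\<And>x. x \<in> set ls \<Longrightarrow> poly f x = 0"
    by (auto simp: in_set_conv_nth)
  have "f = 0"
    by (rule poly_eqI_degree[of "set ls"]) (use r assms distinct_card[OF dist] in auto)
  thus False using assms by auto
qed


lemma ipr_self_zero: assumes "ipr w ls f f = 0" shows "\<And>i. i < length ls \<Longrightarrow> poly f (ls!i) = 0"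
proof -
  have z: "(\<Sum>i<length ls. w i * poly f (ls!i) * poly f (ls!i)) = 0"
    using assms unfolding ipr_def by simp
  have "\<forall>i\<in>{..<length ls}. w i * poly f (ls!i) * poly f (ls!i) = 0"
    using z wpos by (subst (asm) sum_nonneg_eq_0_iff) (auto simp: mult.assoc less_imp_le)
  thus "\<And>i. i < length ls \<Longrightarrow> poly f (ls!i) = 0" using wpos by (metis lessThan_iff mult_eq_0_iff order_less_irrefl)
qed

lemma orth_step:
  assumes o1: "\<forall>q. degree q < j \<longrightarrow> ipr w ls (OP w ls j) q = 0"
  and o2: "\<forall>q. degree q < Suc j \<longrightarrow> ipr w ls (OP w ls (Suc j)) q = 0"
  and p1: "ipr w ls (OP w ls j) (OP w ls j) \<noteq> 0"
  and p2: "ipr w ls (OP w ls (Suc j)) (OP w ls (Suc j)) \<noteq> 0"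
  shows "\<forall>q. degree q < Suc (Suc j) \<longrightarrow> ipr w ls (OP w ls (Suc (Suc j))) q = 0"
proof (intro allI impI)
  fix q :: "real poly" assume dq: "degree q < Suc (Suc j)"
  define g where "g = OP w ls (Suc j)"
  define h where "h = OP w ls j"
  define a where "a = aco w ls g"
  define b where "b = bco w ls h g"
  let ?x = "[:0,1::real:]"
  have f: "OP w ls (Suc (Suc j)) = [:- a, 1:] * g - Polynomial.smult b h"
    unfolding a_def b_def g_def h_def by simp
  have dg: "degree g = Suc j" "coeff g (Suc j) = 1" using OP_monic unfolding g_def by auto
  have dh: "degree h = j" "coeff h j = 1" using OP_monic unfolding h_def by auto
  have hg: "ipr w ls g h = 0" using o2 dh unfolding g_def h_def by auto
  have ag: "a * ipr w ls g g = ipr w ls g (?x * g)"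
    using p2 ipr_x[of w ls g g] unfolding a_def aco_def g_def by simp
  have bh: "b * ipr w ls h h = ipr w ls g g"
    using p1 unfolding b_def bco_def h_def by simp
  have fg: "ipr w ls (OP w ls (Suc (Suc j))) g = 0"
    unfolding f ipr_step using ag hg by (simp add: ipr_sym[of w ls h g])
  have xh: "ipr w ls g (?x * h) = ipr w ls g g"
  proof -
    have "degree (?x * h) \<le> Suc j"
      using degree_mult_le[of ?x h] dh by simp
    hence d1: "degree (?x * h - g) \<le> Suc j" using dg by (intro degree_diff_le) auto
    have "coeff (?x * h - g) (Suc j) = 0" using dh dg by simp
    hence "?x * h - g = 0 \<or> degree (?x * h - g) < Suc j"
      using deg_drop[OF d1] by auto
    hence "ipr w ls g (?x * h - g) = 0" using o2 unfolding g_def by auto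
    thus ?thesis by (simp add: ipr_diff2)
  qed
  have fh: "ipr w ls (OP w ls (Suc (Suc j))) h = 0"
    unfolding f ipr_step using xh hg bh by simp
  define c where "c = coeff q (Suc j)"
  define q1 where "q1 = q - Polynomial.smult c g"
  have "degree q1 \<le> Suc j" unfolding q1_def using dq dg
    by (intro degree_diff_le) auto
  moreover have "coeff q1 (Suc j) = 0" unfolding q1_def c_def using dg by simp
  ultimately have q1d: "degree q1 \<le> j" using deg_drop[of q1 "Suc j"] by fastforce
  define c' where "c' = coeff q1 j"
  define q2 where "q2 = q1 - Polynomial.smult c' h"
  have "degree q2 \<le> j" unfolding q2_def using q1d dh
    by (intro degree_diff_le) auto
  moreover have "coeff q2 j = 0" unfolding q2_def c'_def using dh by simp
  ultimately have q2d: "q2 = 0 \<or> degree q2 < j" using deg_drop by blast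
  have fq2: "ipr w ls (OP w ls (Suc (Suc j))) q2 = 0"
  proof (cases "q2 = 0")
    case True then show ?thesis by simp
  next
    case False
    hence d2: "degree q2 < j" using q2d by auto
    have "degree (?x * q2) < Suc j" using degree_mult_le[of ?x q2] d2 by simp
    hence "ipr w ls g (?x * q2) = 0" using o2 unfolding g_def by auto
    moreover have "ipr w ls g q2 = 0" using o2 d2 unfolding g_def by auto
    moreover have "ipr w ls h q2 = 0" using o1 d2 unfolding h_def by auto
    ultimately show ?thesis unfolding f ipr_step by simp
  qed
  have "q = Polynomial.smult c g + Polynomial.smult c' h + q2"
    unfolding q2_def q1_def by simp
  hence "ipr w ls (OP w ls (Suc (Suc j))) q =
     c * ipr w ls (OP w ls (Suc (Suc j))) g + c' * ipr w ls (OP w ls (Suc (Suc j))) h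
     + ipr w ls (OP w ls (Suc (Suc j))) q2"
    by (metis ipr_add2 ipr_smult2)
  thus "ipr w ls (OP w ls (Suc (Suc j))) q = 0" using fg fh fq2 by simp
qed

lemma orth_all: "Suc j \<le> length ls \<Longrightarrow>
   (\<forall>q. degree q < j \<longrightarrow> ipr w ls (OP w ls j) q = 0) \<and>
   (\<forall>q. degree q < Suc j \<longrightarrow> ipr w ls (OP w ls (Suc j)) q = 0)"
proof (induction j)
  case 0
  have p: "ipr w ls 1 1 \<noteq> 0" using ipr_self_pos[of 1] 0 by (cases ls) auto
  have "ipr w ls (OP w ls 1) q = 0" if dq1: "degree q < 1" for q
  proof -
    obtain c where q: "q = [:c:]" using dq1 degree0_coeffs[of q] by auto
    have "ipr w ls (OP w ls 1) q = c * ipr w ls (OP w ls 1) 1"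
      unfolding q ipr_def by (simp add: sum_distrib_left algebra_simps)
    also have "ipr w ls (OP w ls 1) 1 = ipr w ls ([:0,1:] * 1) 1 - aco w ls 1 * ipr w ls 1 1"
      unfolding ipr_def by (simp add: algebra_simps sum_subtractf sum_distrib_left)
    also have "\<dots> = 0" using p unfolding aco_def by simp
    finally show ?thesis by simp
  qed
  thus ?case by simp
next
  case (Suc j)
  hence IH: "(\<forall>q. degree q < j \<longrightarrow> ipr w ls (OP w ls j) q = 0)"
       "(\<forall>q. degree q < Suc j \<longrightarrow> ipr w ls (OP w ls (Suc j)) q = 0)" by auto
  have "ipr w ls (OP w ls j) (OP w ls j) \<noteq> 0"
    using ipr_self_pos[of "OP w ls j"] OP_monic[of w ls j] Suc.prems by fastforce
  moreover have "ipr w ls (OP w ls (Suc j)) (OP w ls (Suc j)) \<noteq> 0"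
    using ipr_self_pos[of "OP w ls (Suc j)"] OP_monic[of w ls "Suc j"] Suc.prems by fastforce
  ultimately show ?case using orth_step IH by blast
qed

lemma OP_final: assumes "ls \<noteq> []"
  shows "OP w ls (length ls) = (\<Prod>x\<leftarrow>ls. [:- x, 1:])"
proof -
  let ?m = "length ls"
  let ?P = "OP w ls ?m" and ?R = "(\<Prod>x\<leftarrow>ls. [:- x, 1:]) :: real poly"
  have o: "\<forall>q. degree q < ?m \<longrightarrow> ipr w ls ?P q = 0"
    using orth_all[of "?m - 1"] assms by (cases ?m) auto
  have dR: "degree ?R = ?m" "coeff ?R ?m = 1" using prodlin_monic by auto
  have dP: "degree ?P = ?m" "coeff ?P ?m = 1" using OP_monic by auto
  have "degree (?P - ?R) \<le> ?m" using dR dP by (intro degree_diff_le) auto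
  moreover have "coeff (?P - ?R) ?m = 0" using dR dP by simp
  ultimately have "?P - ?R = 0 \<or> degree (?P - ?R) < ?m" using deg_drop by blast
  hence z1: "ipr w ls ?P (?P - ?R) = 0" using o by auto
  have Rz: "\<And>i. i < ?m \<Longrightarrow> poly ?R (ls!i) = 0"
    by (auto simp: poly_prod_list prod_list_zero_iff)
  have z2: "ipr w ls ?P ?R = 0" unfolding ipr_def using Rz by simp
  have "ipr w ls ?P ?P = 0" using z1 z2 by (simp add: ipr_diff2)
  hence Pz: "\<And>i. i < ?m \<Longrightarrow> poly ?P (ls!i) = 0" using ipr_self_zero by blast
  have dd: "?P - ?R = 0 \<or> degree (?P - ?R) < ?m"
    using \<open>?P - ?R = 0 \<or> degree (?P - ?R) < ?m\<close> .
  have "?P - ?R = 0"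
  proof (cases "?P - ?R = 0")
    case False
    hence "degree (?P - ?R) < card (set ls)" using dd distinct_card[OF dist] by auto
    thus ?thesis
      by (intro poly_eqI_degree[of "set ls" _ 0]) (use Pz Rz in \<open>auto simp: in_set_conv_nth\<close>)
  qed
  thus ?thesis by simp
qed

end


definition jac :: "nat \<Rightarrow> (nat \<Rightarrow> real) \<Rightarrow> (nat \<Rightarrow> real) \<Rightarrow> real mat" where
  "jac m a b = mat m m (\<lambda>(i,j). if i = j then a i else if j = Suc i then b i
      else if i = Suc j then b j else 0)"

lemma jac_carrier[simp]: "jac m a b \<in> carrier_mat m m" unfolding jac_def by simp
lemma jac_dim[simp]: "dim_row (jac m a b) = m" "dim_col (jac m a b) = m" unfolding jac_def by auto

lemma jac_index: "i < m \<Longrightarrow> j < m \<Longrightarrow> jac m a b $$ (i,j) = (if i = j then a i else if j = Suc i then b i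
      else if i = Suc j then b j else 0)" unfolding jac_def by simp

lemma cpm_index: assumes "A \<in> carrier_mat n n" "i < n" "j < n"
  shows "char_poly_matrix A $$ (i,j) = (if i = j then [:0,1:] else 0) + [:- (A $$ (i,j)):]"
  using assms unfolding char_poly_matrix_def by auto

lemma cpm_dim[simp]: "dim_row (char_poly_matrix A) = dim_row A" "dim_col (char_poly_matrix A) = dim_col A"
  by (auto simp: char_poly_matrix_def)

lemma cpm_carrier: "A \<in> carrier_mat n n \<Longrightarrow> char_poly_matrix A \<in> carrier_mat n n" by simp

lemma jac_cp0: "char_poly (jac 0 a b) = 1"
proof -
  have "upper_triangular (jac 0 a b)" by (auto simp: upper_triangular_def jac_dim)
  hence "char_poly (jac 0 a b) = (\<Prod>x\<leftarrow>diag_mat (jac 0 a b). [:- x, 1:])"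
    using char_poly_upper_triangular[OF jac_carrier] by blast
  also have "diag_mat (jac 0 a b) = []" by (simp add: diag_mat_def)
  finally show ?thesis by simp
qed

lemma jac_cp1: "char_poly (jac (Suc 0) a b) = [:- a 0, 1:]"
proof -
  have "upper_triangular (jac (Suc 0) a b)" by (auto simp: upper_triangular_def jac_dim)
  hence "char_poly (jac (Suc 0) a b) = (\<Prod>x\<leftarrow>diag_mat (jac (Suc 0) a b). [:- x, 1:])"
    using char_poly_upper_triangular[OF jac_carrier] by blast
  also have "diag_mat (jac (Suc 0) a b) = [a 0]" by (simp add: diag_mat_def jac_index)
  finally show ?thesis by simp
qed

lemma jac_cp_step: "char_poly (jac (Suc (Suc j)) a b) =
   [:- a (Suc j), 1:] * char_poly (jac (Suc j) a b) - [:(b j)^2:] * char_poly (jac j a b)"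
proof -
  let ?n = "Suc (Suc j)"
  define C where "C = char_poly_matrix (jac ?n a b)"
  have C: "C \<in> carrier_mat ?n ?n" unfolding C_def by simp
  have Ci: "C $$ (x,y) = (if x = y then [:- a x, 1:] else if y = Suc x then [:- b x:]
      else if x = Suc y then [:- b y:] else 0)" if "x < ?n" "y < ?n" for x y
    unfolding C_def using that by (simp add: cpm_index[OF jac_carrier] jac_index)
  have "det C = (\<Sum>y<?n. C $$ (Suc j, y) * cofactor C (Suc j) y)"
    by (rule laplace_expansion_row[OF C]) simp
  also have "\<dots> = (\<Sum>y\<in>{j, Suc j}. C $$ (Suc j, y) * cofactor C (Suc j) y)"
    by (rule sum.mono_neutral_right) (auto simp: Ci)
  also have "\<dots> = [:- b j:] * cofactor C (Suc j) j + [:- a (Suc j), 1:] * cofactor C (Suc j) (Suc j)"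
    by (simp add: Ci)
  also have "cofactor C (Suc j) (Suc j) = char_poly (jac (Suc j) a b)"
  proof -
    have "mat_delete C (Suc j) (Suc j) = char_poly_matrix (jac (Suc j) a b)"
      by (rule eq_matI) (use C in \<open>auto simp: mat_delete_def Ci cpm_index[OF jac_carrier] jac_index\<close>)
    thus ?thesis unfolding cofactor_def char_poly_def by simp
  qed
  also have "cofactor C (Suc j) j = [:b j:] * char_poly (jac j a b)"
  proof -
    define E where "E = mat_delete C (Suc j) j"
    have E: "E \<in> carrier_mat (Suc j) (Suc j)" unfolding E_def using mat_delete_carrier[OF C] by simp
    have Ei: "E $$ (x,y) = C $$ (x, if y < j then y else Suc y)" if "x < Suc j" "y < Suc j" for x y
      unfolding E_def mat_delete_def using that C by auto
    have "det E = (\<Sum>x<Suc j. E $$ (x, j) * cofactor E x j)"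
      by (rule laplace_expansion_column[OF E]) simp
    also have "\<dots> = (\<Sum>x\<in>{j}. E $$ (x, j) * cofactor E x j)"
      by (rule sum.mono_neutral_right) (auto simp: Ei Ci)
    also have "\<dots> = [:- b j:] * cofactor E j j" by (simp add: Ei Ci)
    also have "mat_delete E j j = char_poly_matrix (jac j a b)"
      by (rule eq_matI) (use E in \<open>auto simp: mat_delete_def Ei Ci cpm_index[OF jac_carrier] jac_index\<close>)
    hence "cofactor E j j = char_poly (jac j a b)" unfolding cofactor_def char_poly_def by simp
    finally have "det E = [:- b j:] * char_poly (jac j a b)" .
    thus ?thesis unfolding cofactor_def E_def[symmetric] by simp
  qed
  finally have "det C = [:- b j:] * ([:b j:] * char_poly (jac j a b)) + [:- a (Suc j), 1:] * char_poly (jac (Suc j) a b)" .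
  moreover have "[:- b j:] * ([:b j:] * char_poly (jac j a b)) = - ([:(b j)^2:] * char_poly (jac j a b))"
    by (simp add: power2_eq_square mult.assoc[symmetric])
  ultimately show ?thesis unfolding C_def char_poly_def by simp
qed


lemma jacobi_exists:
  fixes w :: "nat \<Rightarrow> real" and ls :: "real list"
  assumes wpos: "\<And>i. i < length ls \<Longrightarrow> w i > 0" and dist: "distinct ls" and len: "length ls \<ge> 2"
  shows "\<exists>a b. char_poly (jac (length ls) a b) = (\<Prod>x\<leftarrow>ls. [:- x, 1:]) \<and>
     (\<forall>j. Suc j < length ls \<longrightarrow> b j \<noteq> 0) \<and>
     a 0 = (\<Sum>i<length ls. w i * ls!i) / (\<Sum>i<length ls. w i)"
proof -
  define a where "a = (\<lambda>j. aco w ls (OP w ls j))"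
  define b where "b = (\<lambda>j. sqrt (bco w ls (OP w ls j) (OP w ls (Suc j))))"
  have bsq: "(b j)^2 = bco w ls (OP w ls j) (OP w ls (Suc j))" for j
    unfolding b_def bco_def
    using ipr_self_nonneg[OF wpos dist] by (intro real_sqrt_pow2) simp
  have cp: "char_poly (jac j a b) = OP w ls j \<and> char_poly (jac (Suc j) a b) = OP w ls (Suc j)" for j
  proof (induction j)
    case 0 then show ?case by (simp add: jac_cp0 jac_cp1 a_def)
  next
    case (Suc j)
    then show ?case by (simp add: jac_cp_step bsq a_def)
  qed
  have "char_poly (jac (length ls) a b) = (\<Prod>x\<leftarrow>ls. [:- x, 1:])"
  proof -
    have "OP w ls (length ls) = (\<Prod>x\<leftarrow>ls. [:- x, 1:])"
      by (rule OP_final) (use wpos dist len in auto)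
    thus ?thesis using cp by auto
  qed
  moreover have "\<forall>j. Suc j < length ls \<longrightarrow> b j \<noteq> 0"
  proof (intro allI impI)
    fix j assume j: "Suc j < length ls"
    have "ipr w ls (OP w ls j) (OP w ls j) > 0"
      using ipr_self_pos[OF wpos dist, where f="OP w ls j"] OP_monic[of w ls j] j by fastforce
    moreover have "ipr w ls (OP w ls (Suc j)) (OP w ls (Suc j)) > 0"
      using ipr_self_pos[OF wpos dist, where f="OP w ls (Suc j)"] OP_monic[of w ls "Suc j"] j by fastforce
    ultimately show "b j \<noteq> 0" unfolding b_def bco_def by simp
  qed
  moreover have "a 0 = (\<Sum>i<length ls. w i * ls!i) / (\<Sum>i<length ls. w i)"
    unfolding a_def aco_def ipr_def by (simp add: mult.commute)
  ultimately show ?thesis by blast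
qed



lemma mult_idx: assumes "A \<in> carrier_mat n n" "B \<in> carrier_mat n n" "i < n" "j < n"
  shows "(A * B) $$ (i, j) = (\<Sum>l<n. A $$ (i,l) * B $$ (l,j))"
  using assms by (auto simp: scalar_prod_def lessThan_atLeast0 intro!: sum.cong)

definition hh :: "nat \<Rightarrow> (nat \<Rightarrow> real) \<Rightarrow> real mat" where
  "hh n w = mat n n (\<lambda>(i,j). (if i = j then 1 else 0) - 2 * w i * w j / (\<Sum>l<n. (w l)^2))"

lemma hh_carrier[simp]: "hh n w \<in> carrier_mat n n" unfolding hh_def by simp

lemma hh_idx: "i < n \<Longrightarrow> j < n \<Longrightarrow> hh n w $$ (i,j) = (if i = j then 1 else 0) - 2 * w i * w j / (\<Sum>l<n. (w l)^2)"
  unfolding hh_def by simp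

lemma sum_single: assumes "finite A" "c \<in> A" "\<And>l. l \<in> A \<Longrightarrow> l \<noteq> c \<Longrightarrow> f l = 0"
  shows "sum f A = f c"
proof -
  have "sum f A = f c + sum f (A - {c})" using assms by (simp add: sum.remove)
  also have "sum f (A - {c}) = 0" using assms by (intro sum.neutral) auto
  finally show ?thesis by simp
qed

lemma hh_sq: assumes s: "(\<Sum>l<n. (w l)^2) \<noteq> 0" shows "hh n w * hh n w = 1\<^sub>m n"
proof (rule eq_matI)
  fix i j assume ij: "i < dim_row (1\<^sub>m n :: real mat)" "j < dim_col (1\<^sub>m n :: real mat)"
  hence ij: "i < n" "j < n" by auto
  define s where "s = (\<Sum>l<n. (w l)^2)"
  have "(hh n w * hh n w) $$ (i,j) = (\<Sum>l<n. ((if i = l then 1 else 0) - 2 * w i * w l / s) *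
        ((if l = j then 1 else 0) - 2 * w l * w j / s))"
    using ij by (subst mult_idx[OF hh_carrier hh_carrier]) (auto simp: hh_idx s_def intro!: sum.cong)
  also have "\<dots> = (\<Sum>l<n. (if i = l then 1 else 0) * (if l = j then 1 else 0))
     - (\<Sum>l<n. (if i = l then 1 else 0) * (2 * w l * w j / s))
     - (\<Sum>l<n. (2 * w i * w l / s) * (if l = j then 1 else 0))
     + (\<Sum>l<n. (2 * w i * w l / s) * (2 * w l * w j / s))"
    by (simp add: algebra_simps sum.distrib sum_subtractf)
  also have "(\<Sum>l<n. (if i = l then 1 else 0) * (if l = j then 1 else 0)) = (if i = j then 1 else (0::real))"
    using ij by (simp add: mult_ac if_distrib[of "\<lambda>x. x * _"] sum.delta cong: if_cong)
  also have "(\<Sum>l<n. (if i = l then 1 else 0) * (2 * w l * w j / s)) = 2 * w i * w j / s"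
    using ij by (subst sum_single[where c=i]) auto
  also have "(\<Sum>l<n. (2 * w i * w l / s) * (if l = j then 1 else 0)) = 2 * w i * w j / s"
    using ij by (subst sum_single[where c=j]) auto
  also have "(\<Sum>l<n. (2 * w i * w l / s) * (2 * w l * w j / s)) = (\<Sum>l<n. (4 * w i * w j / s^2) * (w l)^2)"
    by (rule sum.cong) (simp_all add: power2_eq_square divide_inverse mult_ac)
  also have "\<dots> = (4 * w i * w j / s^2) * (\<Sum>l<n. (w l)^2)" by (rule sum_distrib_left[symmetric])
  also have "\<dots> = 4 * w i * w j / s^2 * s" by (simp only: s_def)
  finally show "(hh n w * hh n w) $$ (i,j) = 1\<^sub>m n $$ (i,j)"
    using ij s unfolding s_def[symmetric] by (simp add: power2_eq_square field_simps)
qed (auto simp: hh_def)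


lemma hh_conj_idx:
  assumes N: "N \<in> carrier_mat n n" and sym: "\<And>i j. i < n \<Longrightarrow> j < n \<Longrightarrow> N $$ (i,j) = N $$ (j,i)"
  and ij: "i < n" "j < n"
  shows "(hh n w * N * hh n w) $$ (i,j) = N $$ (i,j)
     - (2 / (\<Sum>l<n. (w l)^2)) * (w i * (\<Sum>l<n. N $$ (j,l) * w l) + (\<Sum>l<n. N $$ (i,l) * w l) * w j)
     + (2 / (\<Sum>l<n. (w l)^2))^2 * w i * w j * (\<Sum>l'<n. w l' * (\<Sum>l<n. N $$ (l',l) * w l))"
proof -
  define c where "c = 2 / (\<Sum>l<n. (w l)^2)"
  define g where "g = (\<lambda>x. \<Sum>l<n. N $$ (x,l) * w l)"
  have Q: "\<And>x y. x < n \<Longrightarrow> y < n \<Longrightarrow> hh n w $$ (x,y) = (if x = y then 1 else 0) - c * w x * w y"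
    by (simp add: hh_idx c_def)
  have QN: "(hh n w * N) $$ (i,l) = N $$ (i,l) - c * w i * g l" if l: "l < n" for l
  proof -
    have "(hh n w * N) $$ (i,l) = (\<Sum>l'<n. ((if i = l' then 1 else 0) - c * w i * w l') * N $$ (l',l))"
      using ij l N by (subst mult_idx[OF hh_carrier N]) (auto simp: Q intro!: sum.cong)
    also have "\<dots> = (\<Sum>l'<n. (if i = l' then 1 else 0) * N $$ (l',l)) - c * w i * (\<Sum>l'<n. w l' * N $$ (l',l))"
      by (simp add: algebra_simps sum_subtractf sum_distrib_left)
    also have "(\<Sum>l'<n. (if i = l' then 1 else 0) * N $$ (l',l)) = N $$ (i,l)"
      using ij by (subst sum_single[where c=i]) auto
    also have "(\<Sum>l'<n. w l' * N $$ (l',l)) = g l"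
      unfolding g_def using l by (intro sum.cong) (auto simp: sym mult.commute)
    finally show ?thesis .
  qed
  have "(hh n w * N * hh n w) $$ (i,j) = (\<Sum>l<n. (hh n w * N) $$ (i,l) * hh n w $$ (l,j))"
    using ij N by (subst mult_idx[OF mult_carrier_mat[OF hh_carrier N] hh_carrier]) auto
  also have "\<dots> = (\<Sum>l<n. (N $$ (i,l) - c * w i * g l) * ((if l = j then 1 else 0) - c * w l * w j))"
    using ij by (intro sum.cong) (auto simp: QN Q)
  also have "\<dots> = (\<Sum>l<n. N $$ (i,l) * (if l = j then 1 else 0)) - c * w j * (\<Sum>l<n. N $$ (i,l) * w l)
      - c * w i * (\<Sum>l<n. g l * (if l = j then 1 else 0)) + c^2 * w i * w j * (\<Sum>l<n. w l * g l)"
    by (simp add: algebra_simps sum_subtractf sum_distrib_left sum.distrib power2_eq_square)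
  also have "(\<Sum>l<n. N $$ (i,l) * (if l = j then 1 else 0)) = N $$ (i,j)"
    using ij by (subst sum_single[where c=j]) auto
  also have "(\<Sum>l<n. g l * (if l = j then 1 else 0)) = g j"
    using ij by (subst sum_single[where c=j]) auto
  finally show ?thesis unfolding c_def g_def by (simp add: algebra_simps)
qed


lemma cp_block: fixes A B :: "real mat" assumes A: "A \<in> carrier_mat r r" and B: "B \<in> carrier_mat m m"
  shows "char_poly (four_block_mat A (0\<^sub>m r m) (0\<^sub>m m r) B) = char_poly A * char_poly B"
proof -
  have dA: "dim_row A = r" "dim_col A = r" and dB: "dim_row B = m" "dim_col B = m" using A B by auto
  have FB: "four_block_mat A (0\<^sub>m r m) (0\<^sub>m m r) B \<in> carrier_mat (r+m) (r+m)" using A B by auto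
  have cA: "char_poly_matrix A \<in> carrier_mat r r" and cB: "char_poly_matrix B \<in> carrier_mat m m"
    using A B by auto
  have dcA: "dim_row (char_poly_matrix A) = r" "dim_col (char_poly_matrix A) = r"
   and dcB: "dim_row (char_poly_matrix B) = m" "dim_col (char_poly_matrix B) = m" using cA cB by auto
  have eq: "char_poly_matrix (four_block_mat A (0\<^sub>m r m) (0\<^sub>m m r) B) =
     four_block_mat (char_poly_matrix A) (0\<^sub>m r m) (0\<^sub>m m r) (char_poly_matrix B)"
  proof (rule eq_matI)
    fix i j assume "i < dim_row (four_block_mat (char_poly_matrix A) (0\<^sub>m r m) (0\<^sub>m m r) (char_poly_matrix B))"
      "j < dim_col (four_block_mat (char_poly_matrix A) (0\<^sub>m r m) (0\<^sub>m m r) (char_poly_matrix B))"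
    hence ij: "i < r + m" "j < r + m" by (simp_all add: dA dB)
    have L: "char_poly_matrix (four_block_mat A (0\<^sub>m r m) (0\<^sub>m m r) B) $$ (i, j) =
      (if i = j then [:0,1:] else 0) + [:- (four_block_mat A (0\<^sub>m r m) (0\<^sub>m m r) B $$ (i,j)):]"
      by (rule cpm_index[OF FB ij])
    show "char_poly_matrix (four_block_mat A (0\<^sub>m r m) (0\<^sub>m m r) B) $$ (i, j) =
      four_block_mat (char_poly_matrix A) (0\<^sub>m r m) (0\<^sub>m m r) (char_poly_matrix B) $$ (i, j)"
    proof (cases "i < r")
      case True
      then show ?thesis
      proof (cases "j < r")
        case True
        then show ?thesis using \<open>i < r\<close> ij unfolding L
          by (simp add: dA dB dcA dcB cpm_index[OF A])
      next
        case False
        then show ?thesis using \<open>i < r\<close> ij unfolding L by (simp add: dA dB dcA dcB)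
      qed
    next
      case False
      then show ?thesis
      proof (cases "j < r")
        case True
        then show ?thesis using \<open>\<not> i < r\<close> ij unfolding L by (simp add: dA dB dcA dcB)
      next
        case False
        have "i - r < m" using ij \<open>\<not> i < r\<close> by arith
        have "j - r < m" using ij False by arith
        then show ?thesis using \<open>\<not> i < r\<close> False ij unfolding L
          by (simp add: dA dB dcA dcB cpm_index[OF B]) arith
      qed
    qed
  next
    show "dim_row (char_poly_matrix (four_block_mat A (0\<^sub>m r m) (0\<^sub>m m r) B)) =
      dim_row (four_block_mat (char_poly_matrix A) (0\<^sub>m r m) (0\<^sub>m m r) (char_poly_matrix B))"
      by (simp add: dA dB dcA dcB)
    show "dim_col (char_poly_matrix (four_block_mat A (0\<^sub>m r m) (0\<^sub>m m r) B)) =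
      dim_col (four_block_mat (char_poly_matrix A) (0\<^sub>m r m) (0\<^sub>m m r) (char_poly_matrix B))"
      by (simp add: dA dB dcA dcB)
  qed
  have "det (four_block_mat (char_poly_matrix A) (0\<^sub>m r m) (0\<^sub>m m r) (char_poly_matrix B))
     = det (char_poly_matrix A) * det (char_poly_matrix B)"
    by (rule det_four_block_mat_lower_left_zero[OF cA _ refl cB]) simp
  thus ?thesis unfolding char_poly_def eq by simp
qed

definition dmat :: "real list \<Rightarrow> real mat" where
  "dmat dl = mat (length dl) (length dl) (\<lambda>(i,j). if i = j then dl!i else 0)"

lemma dmat_carrier[simp]: "dmat dl \<in> carrier_mat (length dl) (length dl)" unfolding dmat_def by simp

lemma dmat_cp: "char_poly (dmat dl) = (\<Prod>x\<leftarrow>dl. [:- x, 1:])"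
proof -
  have "upper_triangular (dmat dl)" unfolding upper_triangular_def dmat_def by simp
  hence "char_poly (dmat dl) = (\<Prod>x\<leftarrow>diag_mat (dmat dl). [:- x, 1:])"
    using char_poly_upper_triangular[OF dmat_carrier] by blast
  also have "diag_mat (dmat dl) = dl" unfolding diag_mat_def dmat_def by (rule nth_equalityI) auto
  finally show ?thesis .
qed

lemma weights_exist:
  fixes ls :: "real list" and c :: real
  assumes dist: "distinct ls" and len: "length ls \<ge> 2"
  shows "\<exists>w. (\<forall>i<length ls. w i > 0) \<and> (\<Sum>i<length ls. w i * ls!i) / (\<Sum>i<length ls. w i) \<noteq> c"
proof -
  let ?L = "length ls"
  define S where "S = (\<Sum>i<?L. ls!i)"
  show ?thesis
  proof (cases "S / ?L = c")
    case False
    thus ?thesis unfolding S_def by (intro exI[of _ "\<lambda>_. 1"]) auto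
  next
    case True
    hence Sc: "S = ?L * c" using len by (auto simp: field_simps)
    have L01: "0 < ?L" "1 < ?L" using len by auto
    have "ls!0 \<noteq> ls!1" using dist L01 nth_eq_iff_index_eq[OF dist L01] by simp
    have "\<exists>j0. j0 < ?L \<and> ls!j0 \<noteq> c"
    proof (cases "ls!0 = c")
      case True thus ?thesis using \<open>ls!0 \<noteq> ls!1\<close> L01 by (intro exI[of _ 1]) auto
    next
      case False thus ?thesis using L01 by (intro exI[of _ 0]) auto
    qed
    then obtain j0 where j0: "j0 < ?L" "ls!j0 \<noteq> c" by blast
    define w where "w = (\<lambda>i. if i = j0 then 2 else (1::real))"
    have w1: "w i = 1 + (if i = j0 then 1 else 0)" for i unfolding w_def by simp
    have s1: "(\<Sum>i<?L. w i * ls!i) = S + ls!j0"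
    proof -
      have "(\<Sum>i<?L. ls ! i * (if i = j0 then 1 else 0)) = ls!j0"
        using j0 by (subst sum_single[where c=j0]) auto
      thus ?thesis unfolding w1 S_def by (simp add: algebra_simps sum.distrib)
    qed
    have s2: "(\<Sum>i<?L. w i) = ?L + 1"
      unfolding w1 using j0 by (simp add: sum.distrib)
    have "(S + ls!j0) / (?L + 1) \<noteq> c"
    proof
      assume "(S + ls!j0) / (?L + 1) = c"
      hence "S + ls!j0 = (?L + 1) * c" by (simp add: field_simps)
      thus False using Sc j0 by (simp add: algebra_simps)
    qed
    thus ?thesis using s1 s2 unfolding w_def[symmetric]
      by (intro exI[of _ w]) (auto simp: w_def)
  qed
qed

lemma coeff_sum_monom: "l0 \<le> r \<Longrightarrow> coeff (\<Sum>l\<le>r. monom (f l) (2*l)) (2*l0) = (f l0 :: real)"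
  by (simp add: coeff_sum)

lemma choose_t:
  fixes \<delta> :: "nat \<Rightarrow> real" and r :: nat
  assumes d: "r > 0 \<Longrightarrow> \<delta> 0 \<noteq> \<delta> r"
  shows "\<exists>t::real. t \<noteq> 0 \<and> (\<Sum>l\<le>r. t^(2*l)) \<noteq> 2 * t^(2*r) \<and>
    (\<forall>i j. i \<le> r \<longrightarrow> j \<le> r \<longrightarrow> i \<noteq> j \<longrightarrow>
       2 * (\<Sum>l\<le>r. \<delta> l * t^(2*l)) \<noteq> (\<Sum>l\<le>r. t^(2*l)) * (\<delta> i + \<delta> j))"
proof -
  define PS where "PS = (\<Sum>l\<le>r. monom (1::real) (2*l)) - monom 2 (2*r)"
  define PP where "PP = (\<lambda>(i,j). \<Sum>l\<le>r. monom (2 * \<delta> l - \<delta> i - \<delta> j) (2*l))"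
  have pPS: "poly PS t = (\<Sum>l\<le>r. t^(2*l)) - 2 * t^(2*r)" for t
    unfolding PS_def by (simp add: poly_sum poly_monom)
  have pPP: "poly (PP (i,j)) t = 2 * (\<Sum>l\<le>r. \<delta> l * t^(2*l)) - (\<Sum>l\<le>r. t^(2*l)) * (\<delta> i + \<delta> j)" for i j t
    unfolding PP_def by (simp add: poly_sum poly_monom algebra_simps sum_subtractf sum_distrib_left sum_distrib_right)
  have PS0: "PS \<noteq> 0"
  proof
    assume "PS = 0"
    hence "coeff PS 0 = 0" by simp
    moreover have "coeff PS 0 = 1 - (if r = 0 then 2 else 0)"
      unfolding PS_def using coeff_sum_monom[of 0 r "\<lambda>_. 1"] by (simp add: coeff_monom)
    ultimately show False by (simp split: if_splits)
  qed
  have PP0: "PP (i,j) \<noteq> 0" if "i \<le> r" "j \<le> r" "i \<noteq> j" for i j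
  proof -
    have "\<exists>l0\<le>r. 2 * \<delta> l0 - \<delta> i - \<delta> j \<noteq> 0"
    proof (cases "\<delta> i = \<delta> j")
      case False thus ?thesis using that by (intro exI[of _ i]) auto
    next
      case True
      hence r0: "r > 0" using that by auto
      show ?thesis
      proof (cases "\<delta> 0 = \<delta> i")
        case False thus ?thesis using True by (intro exI[of _ 0]) auto
      next
        case c: True thus ?thesis using True d[OF r0] by (intro exI[of _ r]) auto
      qed
    qed
    then obtain l0 where l0: "l0 \<le> r" "2 * \<delta> l0 - \<delta> i - \<delta> j \<noteq> 0" by blast
    have "coeff (PP (i,j)) (2*l0) \<noteq> 0"
      unfolding PP_def using coeff_sum_monom[OF l0(1), of "\<lambda>l. 2 * \<delta> l - \<delta> i - \<delta> j"] l0 by simp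
    thus ?thesis by auto
  qed
  define Bad where "Bad = {0} \<union> {x. poly PS x = 0} \<union>
     (\<Union>ij\<in>{ij. fst ij \<le> r \<and> snd ij \<le> r \<and> fst ij \<noteq> snd ij}. {x. poly (PP ij) x = 0})"
  have fin: "finite {ij::nat\<times>nat. fst ij \<le> r \<and> snd ij \<le> r \<and> fst ij \<noteq> snd ij}"
    by (rule finite_subset[of _ "{..r} \<times> {..r}"]) auto
  have "finite Bad" unfolding Bad_def
    using PS0 PP0 fin by (auto intro!: poly_roots_finite)
  then obtain t where t: "t \<notin> Bad" using ex_new_if_finite[OF infinite_UNIV_char_0] by blast
  show ?thesis
  proof (intro exI[of _ t] conjI allI impI)
    show "t \<noteq> 0" using t unfolding Bad_def by blast
    have "poly PS t \<noteq> 0" using t unfolding Bad_def by blast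
    thus "(\<Sum>l\<le>r. t^(2*l)) \<noteq> 2 * t^(2*r)" using pPS by simp
    fix i j assume "i \<le> r" "j \<le> r" "i \<noteq> j"
    hence "(i,j) \<in> {ij. fst ij \<le> r \<and> snd ij \<le> r \<and> fst ij \<noteq> snd ij}" by simp
    hence "t \<notin> {x. poly (PP (i,j)) x = 0}" using t unfolding Bad_def by blast
    hence "poly (PP (i,j)) t \<noteq> 0" by simp
    thus "2 * (\<Sum>l\<le>r. \<delta> l * t^(2*l)) \<noteq> (\<Sum>l\<le>r. t^(2*l)) * (\<delta> i + \<delta> j)" using pPP by simp
  qed
qed




lemma construct:
  fixes k p :: nat and dl ls :: "real list"
  assumes k2: "k \<ge> 2" and p1: "p \<ge> 1" and ldl: "length dl = k - 2"
    and dls: "distinct ls" and lls: "length ls = p + 2"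
  shows "\<exists>M \<in> sym_pattern (k+p) (lollipop_edge k p).
     char_poly M = (\<Prod>x\<leftarrow>dl. [:- x, 1:]) * (\<Prod>x\<leftarrow>ls. [:- x, 1:])"
proof -
  define r where "r = k - 2"
  define m where "m = p + 2"
  define n where "n = k + p"
  have nrm: "n = r + m" using k2 unfolding n_def r_def m_def by simp
  have rn: "Suc r < n" using p1 unfolding nrm m_def by simp
  obtain wt where wpos: "\<forall>i<length ls. wt i > 0"
    and wne: "(\<Sum>i<length ls. wt i * ls!i) / (\<Sum>i<length ls. wt i) \<noteq> (if r > 0 then dl!0 else 0)"
    using weights_exist[OF dls, of "if r > 0 then dl!0 else 0"] lls by auto
  obtain a b where cpJ: "char_poly (jac m a b) = (\<Prod>x\<leftarrow>ls. [:- x, 1:])"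
    and bnz: "\<forall>j. Suc j < m \<longrightarrow> b j \<noteq> 0"
    and a0: "a 0 = (\<Sum>i<length ls. wt i * ls!i) / (\<Sum>i<length ls. wt i)"
    using jacobi_exists[of ls wt] wpos dls lls unfolding m_def by auto
  define N where "N = four_block_mat (dmat dl) (0\<^sub>m r m) (0\<^sub>m m r) (jac m a b)"
  have ldl': "length dl = r" using ldl r_def by simp
  have N: "N \<in> carrier_mat n n" unfolding N_def nrm using ldl' by auto
  have cpN: "char_poly N = (\<Prod>x\<leftarrow>dl. [:- x, 1:]) * (\<Prod>x\<leftarrow>ls. [:- x, 1:])"
  proof -
    have "dmat dl \<in> carrier_mat r r" using dmat_carrier[of dl] ldl' by simp
    thus ?thesis unfolding N_def using cp_block[OF _ jac_carrier] dmat_cp cpJ by simp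
  qed
  have Nidx: "N $$ (i,j) = (if i < r \<and> j < r then (if i = j then dl!i else 0)
      else if r \<le> i \<and> r \<le> j then (if i = j then a (i-r) else if j = Suc i then b (i-r)
        else if i = Suc j then b (j-r) else 0) else 0)" if ij: "i < n" "j < n" for i j
  proof -
    have m2: "m \<ge> 2" unfolding m_def by simp
    have "i - r < m" using ij m2 unfolding nrm by arith
    have "j - r < m" using ij m2 unfolding nrm by arith
    have dims: "dim_row (dmat dl) = r" "dim_col (dmat dl) = r" "dim_row (jac m a b) = m" "dim_col (jac m a b) = m"
      using ldl' by (auto simp: dmat_def)
    have ij': "i < dim_row (dmat dl) + dim_row (jac m a b)" "j < dim_col (dmat dl) + dim_col (jac m a b)"
      using ij unfolding dims nrm by auto
    have e1: "N $$ (i,j) = (if i < r then if j < r then dmat dl $$ (i, j) else 0\<^sub>m r m $$ (i, j - r)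
       else if j < r then 0\<^sub>m m r $$ (i - r, j) else jac m a b $$ (i - r, j - r))"
      unfolding N_def index_mat_four_block(1)[OF ij'] dims by simp
    show ?thesis
    proof (cases "i < r")
      case True
      show ?thesis
      proof (cases "j < r")
        case True
        then show ?thesis using \<open>i < r\<close> e1 ldl' by (simp add: dmat_def)
      next
        case False
        then show ?thesis using \<open>i < r\<close> e1 \<open>j - r < m\<close> by simp
      qed
    next
      case False
      show ?thesis
      proof (cases "j < r")
        case True
        then show ?thesis using \<open>\<not> i < r\<close> e1 \<open>i - r < m\<close> by simp
      next
        case jF: False
        have q1: "(i - r = j - r) = (i = j)" using False jF by arith
        have q2: "(j - r = Suc (i - r)) = (j = Suc i)" using False jF by arith
        have q3: "(i - r = Suc (j - r)) = (i = Suc j)" using False jF by arith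
        have "N $$ (i,j) = jac m a b $$ (i - r, j - r)" using e1 False jF by simp
        also have "\<dots> = (if i = j then a (i-r) else if j = Suc i then b (i-r)
          else if i = Suc j then b (j-r) else 0)"
          unfolding jac_index[OF \<open>i - r < m\<close> \<open>j - r < m\<close>] q1 q2 q3 by simp
        finally show ?thesis using False jF by simp
      qed
    qed
  qed
  have Nsym: "N $$ (i,j) = N $$ (j,i)" if "i < n" "j < n" for i j
    unfolding Nidx[OF that] Nidx[OF that(2,1)] by auto
  define \<delta> where "\<delta> = (\<lambda>i. if i < r then dl!i else a 0)"
  have dd: "r > 0 \<Longrightarrow> \<delta> 0 \<noteq> \<delta> r" using wne a0 by (simp add: \<delta>_def)
  obtain t :: real where t0: "t \<noteq> 0" and tS: "(\<Sum>l\<le>r. t^(2*l)) \<noteq> 2 * t^(2*r)"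
    and tP: "\<forall>i j. i \<le> r \<longrightarrow> j \<le> r \<longrightarrow> i \<noteq> j \<longrightarrow>
       2 * (\<Sum>l\<le>r. \<delta> l * t^(2*l)) \<noteq> (\<Sum>l\<le>r. t^(2*l)) * (\<delta> i + \<delta> j)"
    using choose_t[OF dd] by blast
  define w where "w = (\<lambda>l. if l \<le> r then t^l else 0)"
  define s where "s = (\<Sum>l<n. (w l)^2)"
  have s_eq: "s = (\<Sum>l\<le>r. t^(2*l))"
  proof -
    have "s = (\<Sum>l\<le>r. (w l)^2)" unfolding s_def
      by (rule sum.mono_neutral_right) (use rn in \<open>auto simp: w_def\<close>)
    also have "\<dots> = (\<Sum>l\<le>r. t^(2*l))" by (rule sum.cong) (auto simp: w_def power_mult[symmetric] mult.commute)
    finally show ?thesis .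
  qed
  have s1: "s \<ge> 1"
  proof -
    have "t^(2*0) \<le> (\<Sum>l\<le>r. t^(2*l))"
      by (rule member_le_sum) (auto simp: power_mult)
    thus ?thesis using s_eq by simp
  qed
  define g where "g = (\<lambda>x. \<Sum>l<n. N $$ (x,l) * w l)"
  have g_eq: "g x = (if x \<le> r then \<delta> x * w x else if x = Suc r then b 0 * t^r else 0)" if x: "x < n" for x
  proof (cases "x < r")
    case True
    have "g x = N $$ (x,x) * w x" unfolding g_def
      by (rule sum_single) (use x True in \<open>auto simp: Nidx w_def\<close>)
    thus ?thesis using True x by (simp add: Nidx \<delta>_def)
  next
    case False
    have "g x = N $$ (x,r) * w r" unfolding g_def
      by (rule sum_single) (use x False rn in \<open>auto simp: Nidx w_def\<close>)
    moreover have "N $$ (x,r) = (if x = r then a 0 else if x = Suc r then b 0 else 0)"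
      using x False rn by (auto simp: Nidx)
    ultimately show ?thesis using False x by (auto simp: \<delta>_def w_def)
  qed
  define \<theta> where "\<theta> = (\<Sum>l'<n. w l' * g l')"
  have th_eq: "\<theta> = (\<Sum>l\<le>r. \<delta> l * t^(2*l))"
  proof -
    have "\<theta> = (\<Sum>l\<le>r. w l * g l)" unfolding \<theta>_def
      by (rule sum.mono_neutral_right) (use rn in \<open>auto simp: w_def\<close>)
    also have "\<dots> = (\<Sum>l\<le>r. \<delta> l * t^(2*l))"
    proof (rule sum.cong)
      fix l assume "l \<in> {..r}"
      hence l: "l \<le> r" "l < n" using rn by auto
      have "t^(2*l) = t^l * t^l" by (simp add: mult_2 power_add)
      thus "w l * g l = \<delta> l * t^(2*l)" using l by (simp add: g_eq w_def)
    qed simp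
    finally show ?thesis .
  qed
  define M where "M = hh n w * N * hh n w"
  have M: "M \<in> carrier_mat n n" unfolding M_def
    using mult_carrier_mat[OF mult_carrier_mat[OF hh_carrier N] hh_carrier] .
  have Midx: "M $$ (i,j) = N $$ (i,j) - (2/s) * (w i * g j + g i * w j) + (2/s)^2 * w i * w j * \<theta>"
    if "i < n" "j < n" for i j
    unfolding M_def g_def \<theta>_def s_def using hh_conj_idx[OF N Nsym that] by simp
  have sim: "similar_mat M N"
    unfolding similar_mat_def similar_mat_wit_def Let_def
    by (rule exI[of _ "hh n w"], rule exI[of _ "hh n w"])
      (use M N s1 hh_sq[where n=n and w=w] in \<open>auto simp: M_def s_def hh_def\<close>)
  have cpM: "char_poly M = char_poly N" by (rule char_poly_similar[OF sim])
  have Msym: "M $$ (i,j) = M $$ (j,i)" if "i < n" "j < n" for i j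
    unfolding Midx[OF that] Midx[OF that(2,1)] Nsym[OF that] by (simp add: algebra_simps)
  have kr: "k = r + 2" using k2 unfolding r_def by simp
  have sne: "s \<noteq> 0" using s1 by simp
  have wlo: "w x = t^x" if "x \<le> r" for x using that by (simp add: w_def)
  have whi: "w x = 0" if "r < x" for x using that by (simp add: w_def)
  have pat: "(M $$ (i,j) \<noteq> 0) = lollipop_edge k p i j" if ij: "i < j" "j < n" for i j
  proof -
    have i_n: "i < n" using ij by simp
    show ?thesis
    proof (cases "j \<le> r")
      case True
      have N0: "N $$ (i,j) = 0" using ij True by (simp add: Nidx)
      have "M $$ (i,j) = - (2/s) * (t^i * (\<delta> j * t^j) + \<delta> i * t^i * t^j) + (2/s)^2 * t^i * t^j * \<theta>"
        using ij True by (simp add: Midx N0 g_eq wlo)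
      also have "\<dots> = (2/s) * t^i * t^j * ((2/s) * \<theta> - \<delta> i - \<delta> j)"
        using sne by (simp add: field_simps power2_eq_square)
      finally have Me: "M $$ (i,j) = (2/s) * t^i * t^j * ((2/s) * \<theta> - \<delta> i - \<delta> j)" .
      have "2 * \<theta> \<noteq> s * (\<delta> i + \<delta> j)" using tP ij True unfolding th_eq s_eq by auto
      hence "(2/s) * \<theta> - \<delta> i - \<delta> j \<noteq> 0" using sne by (simp add: field_simps)
      hence "M $$ (i,j) \<noteq> 0" unfolding Me using sne t0 by simp
      moreover have "lollipop_edge k p i j" unfolding lollipop_edge_def using ij True kr nrm m_def by auto
      ultimately show ?thesis by simp
    next
      case jr: False
      show ?thesis
      proof (cases "i \<le> r")
        case ir: True
        show ?thesis
        proof (cases "j = Suc r")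
          case True
          have N0: "N $$ (i,j) = (if i = r then b 0 else 0)" using ij ir True by (auto simp: Nidx)
          have b0: "b 0 \<noteq> 0" using bnz unfolding m_def by simp
          have "M $$ (i,j) = N $$ (i,j) - (2/s) * (t^i * (b 0 * t^r))"
            using ij ir True by (simp add: Midx g_eq wlo whi)
          moreover have "N $$ (i,j) - (2/s) * (t^i * (b 0 * t^r)) \<noteq> 0"
          proof (cases "i = r")
            case True
            have "t^r * t^r = t^(2*r)" by (simp add: mult_2 power_add)
            hence "s \<noteq> 2 * (t^r * t^r)" using tS s_eq by simp
            hence "1 - (2/s) * (t^r * t^r) \<noteq> 0" using sne by (simp add: field_simps)
            moreover have "N $$ (i,j) - (2/s) * (t^i * (b 0 * t^r)) = b 0 * (1 - (2/s) * (t^r * t^r))"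
              using True N0 by (simp add: algebra_simps)
            ultimately show ?thesis using b0 by simp
          next
            case False
            thus ?thesis using N0 b0 sne t0 by simp
          qed
          moreover have "lollipop_edge k p i j" unfolding lollipop_edge_def using ij True ir kr nrm m_def by auto
          ultimately show ?thesis by simp
        next
          case False
          have jr2: "Suc (Suc r) \<le> j" using jr False by simp
          have N0: "N $$ (i,j) = 0" using ij ir jr2 by (auto simp: Nidx)
          have "M $$ (i,j) = 0" using ij ir jr2 by (simp add: Midx g_eq wlo whi N0)
          moreover have "\<not> lollipop_edge k p i j" unfolding lollipop_edge_def using ij ir jr2 kr by auto
          ultimately show ?thesis by simp
        qed
      next
        case ir: False
        have Me: "M $$ (i,j) = N $$ (i,j)" using ij ir by (simp add: Midx whi)
        have Ne: "N $$ (i,j) = (if j = Suc i then b (i - r) else 0)" using ij ir by (auto simp: Nidx)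
        have "Suc (i - r) < m" using ij ir unfolding nrm by arith
        hence bn: "b (i - r) \<noteq> 0" using bnz by simp
        have "lollipop_edge k p i j = (j = Suc i)" unfolding lollipop_edge_def using ij ir kr nrm m_def by auto
        thus ?thesis using Me Ne bn by simp
      qed
    qed
  qed
  have edge_sym: "lollipop_edge k p i j = lollipop_edge k p j i" for i j
    unfolding lollipop_edge_def by auto
  have "M \<in> sym_pattern n (lollipop_edge k p)"
    unfolding sym_pattern_def
  proof (intro CollectI conjI allI impI)
    show "M \<in> carrier_mat n n" by (rule M)
    show "transpose_mat M = M"
      by (rule eq_matI) (use M Msym in auto)
    fix i j assume "i < n" "j < n" "i \<noteq> j"
    show "(M $$ (i,j) \<noteq> 0) = lollipop_edge k p i j"
    proof (cases "i < j")
      case True thus ?thesis using pat \<open>j < n\<close> by simp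
    next
      case False
      hence "j < i" using \<open>i \<noteq> j\<close> by simp
      thus ?thesis using pat[of j i] \<open>i < n\<close> \<open>j < n\<close> Msym edge_sym by metis
    qed
  qed
  thus ?thesis using cpM cpN unfolding n_def by auto
qed


lemma mult_idx': assumes "A \<in> carrier_mat n n" "B \<in> carrier_mat n n" "i < n" "j < n"
  shows "(A * B) $$ (i, j) = (\<Sum>l<n. A $$ (i,l) * B $$ (l,j))"
  using assms by (auto simp: scalar_prod_def lessThan_atLeast0 intro!: sum.cong)

lemma sum_single': assumes "finite A" "c \<in> A" "\<And>l. l \<in> A \<Longrightarrow> l \<noteq> c \<Longrightarrow> f l = 0"
  shows "sum f A = f c"
proof -
  have "sum f A = f c + sum f (A - {c})" using assms by (simp add: sum.remove)
  also have "sum f (A - {c}) = 0" using assms by (intro sum.neutral) auto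
  finally show ?thesis by simp
qed

definition Fm :: "real mat \<Rightarrow> nat \<Rightarrow> real \<Rightarrow> real mat" where
  "Fm A n e = A - e \<cdot>\<^sub>m 1\<^sub>m n"

fun lprod :: "real mat \<Rightarrow> nat \<Rightarrow> real list \<Rightarrow> real mat" where
  "lprod A n [] = 1\<^sub>m n"
| "lprod A n (e # es) = Fm A n e * lprod A n es"

context
  fixes A :: "real mat" and n :: nat
  assumes A: "A \<in> carrier_mat n n"
begin

lemma Fm_carrier[simp]: "Fm A n e \<in> carrier_mat n n"
  unfolding Fm_def using A by auto

lemma Fm_idx: "i < n \<Longrightarrow> j < n \<Longrightarrow> Fm A n e $$ (i,j) = A $$ (i,j) - e * (if i = j then 1 else 0)"
  unfolding Fm_def using A by auto

lemma Fm_dim[simp]: "dim_row (Fm A n e) = n" "dim_col (Fm A n e) = n"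
  using Fm_carrier[of e] carrier_matD by blast+

lemma lprod_carrier[simp]: "lprod A n es \<in> carrier_mat n n"
  by (induction es) (auto intro: mult_carrier_mat)

lemma lprod_dim[simp]: "dim_row (lprod A n es) = n" "dim_col (lprod A n es) = n"
  using lprod_carrier[of es] carrier_matD by blast+

lemma Fm_prod_idx: assumes "i < n" "j < n"
  shows "(Fm A n e * Fm A n f) $$ (i,j) = (A * A) $$ (i,j) - (e + f) * A $$ (i,j) + e * f * (if i = j then 1 else 0)"
proof -
  have "(Fm A n e * Fm A n f) $$ (i,j) = (\<Sum>l<n. (A $$ (i,l) - e * (if i = l then 1 else 0)) * (A $$ (l,j) - f * (if l = j then 1 else 0)))"
    using assms by (subst mult_idx'[OF Fm_carrier Fm_carrier]) (auto simp: Fm_idx intro!: sum.cong)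
  also have "\<dots> = (\<Sum>l<n. A $$ (i,l) * A $$ (l,j)) - f * (\<Sum>l<n. A $$ (i,l) * (if l = j then 1 else 0))
     - e * (\<Sum>l<n. (if i = l then 1 else 0) * A $$ (l,j)) + e * f * (\<Sum>l<n. (if i = l then 1 else 0) * (if l = j then 1 else 0))"
    by (simp add: algebra_simps sum.distrib sum_subtractf sum_distrib_left)
  also have "(\<Sum>l<n. A $$ (i,l) * (if l = j then 1 else 0)) = A $$ (i,j)"
    using assms by (subst sum_single'[where c=j]) auto
  also have "(\<Sum>l<n. (if i = l then 1 else 0) * A $$ (l,j)) = A $$ (i,j)"
    using assms by (subst sum_single'[where c=i]) auto
  also have "(\<Sum>l<n. (if i = l then 1 else 0) * (if l = j then 1 else (0::real))) = (if i = j then 1 else 0)"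
    using assms by (subst sum_single'[where c=i]) auto
  also have "(\<Sum>l<n. A $$ (i,l) * A $$ (l,j)) = (A * A) $$ (i,j)"
    using assms by (subst mult_idx'[OF A A]) auto
  finally show ?thesis by (simp add: algebra_simps)
qed

lemma Fm_comm: "Fm A n e * Fm A n f = Fm A n f * Fm A n e"
proof (rule eq_matI)
  fix i j assume "i < dim_row (Fm A n f * Fm A n e)" "j < dim_col (Fm A n f * Fm A n e)"
  hence ij: "i < n" "j < n" by auto
  show "(Fm A n e * Fm A n f) $$ (i, j) = (Fm A n f * Fm A n e) $$ (i, j)"
    using Fm_prod_idx[OF ij, of e f] Fm_prod_idx[OF ij, of f e] by (simp add: algebra_simps)
qed auto

lemma asc: "X \<in> carrier_mat n n \<Longrightarrow> Y \<in> carrier_mat n n \<Longrightarrow> Z \<in> carrier_mat n n \<Longrightarrow>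
   X * Y * Z = X * (Y * (Z :: real mat))"
  by (rule assoc_mult_mat)

lemma Fm_lprod_comm: "Fm A n e * lprod A n es = lprod A n es * Fm A n e"
proof (induction es)
  case Nil then show ?case by simp
next
  case (Cons f es)
  have "Fm A n e * lprod A n (f # es) = Fm A n e * (Fm A n f * lprod A n es)" by simp
  also have "\<dots> = (Fm A n e * Fm A n f) * lprod A n es" by (rule asc[symmetric]) auto
  also have "\<dots> = (Fm A n f * Fm A n e) * lprod A n es" by (simp only: Fm_comm)
  also have "\<dots> = Fm A n f * (Fm A n e * lprod A n es)" by (rule asc) auto
  also have "\<dots> = Fm A n f * (lprod A n es * Fm A n e)" using Cons by simp
  also have "\<dots> = (Fm A n f * lprod A n es) * Fm A n e" by (rule asc[symmetric]) auto
  finally show ?case by simp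
qed

lemma lprod_append: "lprod A n (xs @ ys) = lprod A n xs * lprod A n ys"
proof (induction xs)
  case Nil then show ?case by simp
next
  case (Cons x xs)
  have "lprod A n ((x # xs) @ ys) = Fm A n x * (lprod A n xs * lprod A n ys)" using Cons by simp
  also have "\<dots> = (Fm A n x * lprod A n xs) * lprod A n ys" by (rule asc[symmetric]) auto
  finally show ?case by simp
qed

lemma lprod_comm: "lprod A n xs * lprod A n ys = lprod A n ys * lprod A n xs"
proof (induction xs)
  case Nil then show ?case by simp
next
  case (Cons x xs)
  have "lprod A n (x # xs) * lprod A n ys = (Fm A n x * lprod A n xs) * lprod A n ys" by simp
  also have "\<dots> = Fm A n x * (lprod A n xs * lprod A n ys)" by (rule asc) auto
  also have "\<dots> = Fm A n x * (lprod A n ys * lprod A n xs)" using Cons by simp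
  also have "\<dots> = (Fm A n x * lprod A n ys) * lprod A n xs" by (rule asc[symmetric]) auto
  also have "\<dots> = (lprod A n ys * Fm A n x) * lprod A n xs" by (simp only: Fm_lprod_comm)
  also have "\<dots> = lprod A n ys * (Fm A n x * lprod A n xs)" by (rule asc) auto
  finally show ?case by simp
qed

lemma lprod_mset: "mset xs = mset ys \<Longrightarrow> lprod A n xs = lprod A n ys"
proof (induction xs arbitrary: ys)
  case Nil then show ?case by simp
next
  case (Cons x xs)
  have "x \<in> set ys" using Cons.prems by (metis list.set_intros(1) set_mset_mset)
  then obtain ys1 ys2 where ys: "ys = ys1 @ x # ys2" by (meson split_list)
  have "mset xs = mset (ys1 @ ys2)" using Cons.prems ys by simp
  hence "lprod A n xs = lprod A n (ys1 @ ys2)" using Cons.IH by blast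
  have "lprod A n ys = lprod A n ys1 * (Fm A n x * lprod A n ys2)" unfolding ys lprod_append by simp
  also have "\<dots> = (lprod A n ys1 * Fm A n x) * lprod A n ys2"
    by (rule assoc_mult_mat[of _ n n _ n _ n, symmetric]) auto
  also have "\<dots> = (Fm A n x * lprod A n ys1) * lprod A n ys2"
    by (simp only: Fm_lprod_comm)
  also have "\<dots> = Fm A n x * (lprod A n ys1 * lprod A n ys2)"
    by (rule assoc_mult_mat[of _ n n _ n _ n]) auto
  also have "\<dots> = lprod A n (x # xs)"
    using \<open>lprod A n xs = lprod A n (ys1 @ ys2)\<close> by (simp add: lprod_append)
  finally show ?case by simp
qed

end

lemma Fm_sim: assumes A: "A \<in> carrier_mat n n" and B: "B \<in> carrier_mat n n"
  and P: "P \<in> carrier_mat n n" and Q: "Q \<in> carrier_mat n n"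
  and PQ: "P * Q = 1\<^sub>m n" and AB: "A = P * B * Q"
  shows "Fm A n e = P * Fm B n e * Q"
proof -
  have "P * Fm B n e = P * B - P * (e \<cdot>\<^sub>m 1\<^sub>m n)" unfolding Fm_def
    by (rule mult_minus_distrib_mat[OF P B]) auto
  also have "P * (e \<cdot>\<^sub>m 1\<^sub>m n) = e \<cdot>\<^sub>m P"
    using mult_smult_distrib[OF P one_carrier_mat, of e] P by simp
  finally have 1: "P * Fm B n e = P * B - e \<cdot>\<^sub>m P" .
  have "(P * B - e \<cdot>\<^sub>m P) * Q = P * B * Q - (e \<cdot>\<^sub>m P) * Q"
    by (rule minus_mult_distrib_mat) (use P B Q in auto)
  also have "(e \<cdot>\<^sub>m P) * Q = e \<cdot>\<^sub>m 1\<^sub>m n" using mult_smult_assoc_mat[OF P Q] PQ by simp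
  finally show ?thesis using 1 AB unfolding Fm_def by simp
qed

lemma lprod_sim: assumes A: "A \<in> carrier_mat n n" and B: "B \<in> carrier_mat n n"
  and P: "P \<in> carrier_mat n n" and Q: "Q \<in> carrier_mat n n"
  and PQ: "P * Q = 1\<^sub>m n" and QP: "Q * P = 1\<^sub>m n" and AB: "A = P * B * Q"
  shows "lprod A n es = P * lprod B n es * Q"
proof (induction es)
  case Nil then show ?case using PQ P by simp
next
  case (Cons e es)
  let ?FB = "Fm B n e" and ?LB = "lprod B n es"
  have FB: "?FB \<in> carrier_mat n n" using Fm_carrier[OF B] .
  have LB: "?LB \<in> carrier_mat n n" using lprod_carrier[OF B] .
  have "lprod A n (e # es) = (P * ?FB * Q) * (P * ?LB * Q)"
    using Cons Fm_sim[OF A B P Q PQ AB] by simp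
  also have "\<dots> = ((P * ?FB * Q) * (P * ?LB)) * Q"
    by (rule assoc_mult_mat[symmetric]) (use P Q FB LB in auto)
  also have "(P * ?FB * Q) * (P * ?LB) = (P * ?FB) * (Q * (P * ?LB))"
    by (rule assoc_mult_mat) (use P Q FB LB in auto)
  also have "Q * (P * ?LB) = (Q * P) * ?LB"
    by (rule assoc_mult_mat[symmetric]) (use P Q FB LB in auto)
  also have "\<dots> = ?LB" using QP LB by simp
  also have "(P * ?FB) * ?LB = P * (?FB * ?LB)"
    by (rule assoc_mult_mat) (use P Q FB LB in auto)
  finally show ?case by simp
qed

lemma lprod_ut: assumes B: "B \<in> carrier_mat n n" and ut: "upper_triangular B" and dg: "diag_mat B = es"
  shows "lprod B n es = 0\<^sub>m n n"
proof -
  have les: "length es = n" using dg B unfolding diag_mat_def by auto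
  have esj: "es ! j = B $$ (j,j)" if "j < n" for j using dg B that unfolding diag_mat_def by auto
  have utz: "B $$ (i,l) = 0" if "l < i" "i < n" for i l using ut B that unfolding upper_triangular_def by auto
  have main: "\<forall>i c. n - d \<le> i \<longrightarrow> i < n \<longrightarrow> c < n \<longrightarrow> lprod B n (drop (n - d) es) $$ (i,c) = 0"
    if "d \<le> n" for d
    using that
  proof (induction d)
    case 0 then show ?case by auto
  next
    case (Suc d)
    define j where "j = n - Suc d"
    have jn: "j < n" "Suc j = n - d" using Suc.prems unfolding j_def by auto
    have IH: "\<forall>i c. Suc j \<le> i \<longrightarrow> i < n \<longrightarrow> c < n \<longrightarrow> lprod B n (drop (Suc j) es) $$ (i,c) = 0"
      using Suc jn by auto
    have dr: "drop j es = es ! j # drop (Suc j) es" using jn(1) les by (metis Cons_nth_drop_Suc)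
    show ?case unfolding j_def[symmetric]
    proof (intro allI impI)
      fix i c assume ic: "j \<le> i" "i < n" "c < n"
      let ?L = "lprod B n (drop (Suc j) es)"
      have "lprod B n (drop j es) $$ (i,c) = (\<Sum>l<n. Fm B n (es!j) $$ (i,l) * ?L $$ (l,c))"
        unfolding dr using ic by (simp add: mult_idx'[OF Fm_carrier[OF B] lprod_carrier[OF B]])
      also have "\<dots> = 0"
      proof (rule sum.neutral, intro ballI)
        fix l assume "l \<in> {..<n}"
        hence l: "l < n" by simp
        show "Fm B n (es!j) $$ (i,l) * ?L $$ (l,c) = 0"
        proof (cases "l < i")
          case True thus ?thesis using utz[OF True ic(2)] by (simp add: Fm_idx[OF B ic(2) l])
        next
          case False
          show ?thesis
          proof (cases "l = j")
            case True
            hence "i = j" using False ic by simp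
            hence "Fm B n (es!j) $$ (i,l) = 0"
              using Fm_idx[OF B ic(2) l, of "es!j"] True esj[OF jn(1)] by simp
            thus ?thesis by simp
          next
            case lj: False
            hence "Suc j \<le> l" using False ic by simp
            thus ?thesis using IH l ic by simp
          qed
        qed
      qed
      finally show "lprod B n (drop j es) $$ (i,c) = 0" .
    qed
  qed
  show ?thesis
  proof (rule eq_matI)
    fix i c assume "i < dim_row (0\<^sub>m n n :: real mat)" "c < dim_col (0\<^sub>m n n :: real mat)"
    thus "lprod B n es $$ (i,c) = 0\<^sub>m n n $$ (i,c)" using main[of n] by simp
  qed (use lprod_carrier[OF B] in auto)
qed

lemma lprod_sym: assumes A: "A \<in> carrier_mat n n" and sym: "transpose_mat A = A"
  shows "transpose_mat (lprod A n es) = lprod A n es"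
proof (induction es)
  case Nil then show ?case by simp
next
  case (Cons e es)
  have FT: "transpose_mat (Fm A n e) = Fm A n e"
  proof (rule eq_matI)
    fix i j assume "i < dim_row (Fm A n e)" "j < dim_col (Fm A n e)"
    hence ij: "i < n" "j < n" using Fm_dim[OF A] by auto
    have "A $$ (j,i) = A $$ (i,j)" using sym ij A by (metis carrier_matD index_transpose_mat(1))
    thus "transpose_mat (Fm A n e) $$ (i,j) = Fm A n e $$ (i,j)"
      using ij by (simp add: Fm_idx[OF A] Fm_dim[OF A])
  qed (simp_all add: Fm_dim[OF A])
  have "transpose_mat (lprod A n (e # es)) = transpose_mat (lprod A n es) * transpose_mat (Fm A n e)"
    by (simp add: transpose_mult[OF Fm_carrier[OF A] lprod_carrier[OF A]])
  also have "\<dots> = lprod A n es * Fm A n e" using Cons FT by simp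
  also have "\<dots> = Fm A n e * lprod A n es" using Fm_lprod_comm[OF A] by simp
  finally show ?case by simp
qed

lemma sym_sq_zero: fixes X :: "real mat"
  assumes X: "X \<in> carrier_mat n n" and sym: "transpose_mat X = X" and sq: "X * X = 0\<^sub>m n n"
  shows "X = 0\<^sub>m n n"
proof (rule eq_matI)
  fix i j assume "i < dim_row (0\<^sub>m n n :: real mat)" "j < dim_col (0\<^sub>m n n :: real mat)"
  hence ij: "i < n" "j < n" by auto
  have "(X * X) $$ (i,i) = (\<Sum>l<n. X $$ (i,l) * X $$ (l,i))" using mult_idx'[OF X X ij(1) ij(1)] .
  also have "\<dots> = (\<Sum>l<n. (X $$ (i,l))^2)"
  proof (rule sum.cong)
    fix l assume "l \<in> {..<n}"
    hence "X $$ (l,i) = X $$ (i,l)" using sym ij X by (metis carrier_matD index_transpose_mat(1) lessThan_iff)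
    thus "X $$ (i,l) * X $$ (l,i) = (X $$ (i,l))^2" by (simp add: power2_eq_square)
  qed simp
  finally have "(\<Sum>l<n. (X $$ (i,l))^2) = 0" using sq ij by simp
  hence "\<forall>l\<in>{..<n}. (X $$ (i,l))^2 = 0" by (subst (asm) sum_nonneg_eq_0_iff) auto
  thus "X $$ (i,j) = 0\<^sub>m n n $$ (i,j)" using ij by simp
qed (use X in auto)

lemma lprod_reduce: assumes A: "A \<in> carrier_mat n n" and sym: "transpose_mat A = A"
  shows "set rest \<subseteq> set ds \<Longrightarrow> lprod A n (ds @ rest) = 0\<^sub>m n n \<Longrightarrow> lprod A n ds = 0\<^sub>m n n"
proof (induction rest)
  case Nil then show ?case by simp
next
  case (Cons e r)
  let ?T = "lprod A n (ds @ r)"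
  have e: "e \<in> set ds" using Cons.prems by auto
  have "?T * Fm A n e = lprod A n (ds @ r @ [e])"
    using lprod_append[OF A, of "ds @ r" "[e]"] Fm_carrier[OF A, of e] by simp
  also have "\<dots> = lprod A n (ds @ e # r)" by (rule lprod_mset[OF A]) simp
  finally have T1: "?T * Fm A n e = 0\<^sub>m n n" using Cons.prems by simp
  define U where "U = lprod A n (remove1 e ds @ r)"
  have "?T = lprod A n (e # (remove1 e ds @ r))" by (rule lprod_mset[OF A]) (use e in simp)
  hence T2: "?T = Fm A n e * U" unfolding U_def by simp
  have U: "U \<in> carrier_mat n n" unfolding U_def using lprod_carrier[OF A] .
  have "?T * ?T = (?T * Fm A n e) * U"
    unfolding T2[symmetric] by (subst T2) (rule assoc_mult_mat[symmetric], use A U lprod_carrier[OF A] in auto)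
  also have "\<dots> = 0\<^sub>m n n" using T1 U by simp
  finally have "?T = 0\<^sub>m n n"
    by (intro sym_sq_zero[OF lprod_carrier[OF A] lprod_sym[OF A sym]])
  thus ?case using Cons.IH Cons.prems by simp
qed


definition dst :: "nat \<Rightarrow> nat \<Rightarrow> nat" where
  "dst k i = (if i = 0 then 0 else if i < k then 1 else i + 2 - k)"

definition par :: "nat \<Rightarrow> nat \<Rightarrow> nat" where
  "par k i = (if i < k then 0 else i - 1)"

lemma G1: "k \<ge> 2 \<Longrightarrow> lollipop_edge k p m i \<Longrightarrow> dst k i \<le> dst k m + 1"
  unfolding lollipop_edge_def dst_def by auto

lemma G2: "k \<ge> 2 \<Longrightarrow> i \<noteq> 0 \<Longrightarrow> lollipop_edge k p m i \<Longrightarrow> m \<noteq> par k i \<Longrightarrow> dst k i \<le> dst k m"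
  unfolding lollipop_edge_def dst_def par_def by auto

lemma G3: "k \<ge> 2 \<Longrightarrow> i \<noteq> 0 \<Longrightarrow> i < k + p \<Longrightarrow>
   par k i < k + p \<and> lollipop_edge k p (par k i) i \<and> dst k (par k i) + 1 = dst k i \<and> par k i \<noteq> i"
  unfolding lollipop_edge_def dst_def par_def by auto

lemma walk:
  assumes k2: "k \<ge> 2" and AS: "A \<in> sym_pattern (k + p) (lollipop_edge k p)"
  shows "i < k + p \<Longrightarrow> (length l < dst k i \<longrightarrow> lprod A (k+p) l $$ (0,i) = 0) \<and>
     (length l = dst k i \<longrightarrow> lprod A (k+p) l $$ (0,i) \<noteq> 0)"
proof (induction l arbitrary: i)
  case Nil
  have "0 < k + p" using k2 by simp
  then show ?case using Nil by (auto simp: dst_def)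
next
  case (Cons e l)
  define n where "n = k + p"
  have A: "A \<in> carrier_mat n n" using AS unfolding sym_pattern_def n_def by auto
  have Ae: "\<And>a b. a < n \<Longrightarrow> b < n \<Longrightarrow> a \<noteq> b \<Longrightarrow> (A $$ (a,b) \<noteq> 0) = lollipop_edge k p a b"
    using AS unfolding sym_pattern_def n_def by auto
  have i: "i < n" using Cons.prems n_def by simp
  have n0: "0 < n" using i by simp
  have L: "lprod A n (e # l) = lprod A n l * Fm A n e"
    using Fm_lprod_comm[OF A] by simp
  have ent: "lprod A n (e # l) $$ (0,i) = (\<Sum>m<n. lprod A n l $$ (0,m) * Fm A n e $$ (m,i))"
    unfolding L using mult_idx'[OF lprod_carrier[OF A] Fm_carrier[OF A] n0 i] .
  have term0: "lprod A n l $$ (0,m) * Fm A n e $$ (m,i) = 0"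
    if m: "m < n" and lm: "length l < dst k m \<or> (m \<noteq> i \<and> \<not> lollipop_edge k p m i)" for m
  proof (cases "length l < dst k m")
    case True thus ?thesis using Cons.IH[of m] m n_def by simp
  next
    case False
    hence "m \<noteq> i" "\<not> lollipop_edge k p m i" using lm by auto
    hence "A $$ (m,i) = 0" using Ae[OF m i] by auto
    thus ?thesis using Fm_idx[OF A m i] \<open>m \<noteq> i\<close> by simp
  qed
  show ?case
  proof (intro conjI impI)
    assume len: "length (e # l) < dst k i"
    have "lprod A n (e # l) $$ (0,i) = 0" unfolding ent
    proof (rule sum.neutral, intro ballI)
      fix m assume "m \<in> {..<n}"
      hence m: "m < n" by simp
      show "lprod A n l $$ (0,m) * Fm A n e $$ (m,i) = 0"
      proof (cases "m = i \<or> lollipop_edge k p m i")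
        case True
        hence "dst k i \<le> dst k m + 1" using G1[OF k2, of p m i] by auto
        thus ?thesis using term0[OF m] len by simp
      next
        case False thus ?thesis using term0[OF m] by simp
      qed
    qed
    thus "lprod A (k+p) (e # l) $$ (0,i) = 0" by (simp add: n_def)
  next
    assume len: "length (e # l) = dst k i"
    hence i0: "i \<noteq> 0" by (auto simp: dst_def split: if_splits)
    define q where "q = par k i"
    have q: "q < n" "lollipop_edge k p q i" "dst k q + 1 = dst k i" "q \<noteq> i"
      using G3[OF k2 i0, of p] Cons.prems unfolding q_def n_def by auto
    have "lprod A n (e # l) $$ (0,i) = lprod A n l $$ (0,q) * Fm A n e $$ (q,i)"
      unfolding ent
    proof (rule sum_single')
      fix m assume "m \<in> {..<n}" "m \<noteq> q"
      hence m: "m < n" "m \<noteq> q" by auto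
      show "lprod A n l $$ (0,m) * Fm A n e $$ (m,i) = 0"
      proof (cases "m = i \<or> lollipop_edge k p m i")
        case True
        hence "length l < dst k m"
        proof
          assume "m = i" thus ?thesis using len by simp
        next
          assume "lollipop_edge k p m i"
          hence "dst k i \<le> dst k m" using G2[OF k2 i0 _ ] m(2) unfolding q_def by blast
          thus ?thesis using len by simp
        qed
        thus ?thesis using term0[OF m(1)] by simp
      next
        case False thus ?thesis using term0[OF m(1)] by simp
      qed
    qed (use q in auto)
    moreover have "lprod A n l $$ (0,q) \<noteq> 0" using Cons.IH[of q] q len n_def by simp
    moreover have "Fm A n e $$ (q,i) \<noteq> 0" using Fm_idx[OF A q(1) i] q Ae[OF q(1) i] by simp
    ultimately show "lprod A (k+p) (e # l) $$ (0,i) \<noteq> 0" by (simp add: n_def)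
  qed
qed


lemma pm_list: "(\<Prod>a\<in>#mset xs. f a) = (\<Prod>a\<leftarrow>xs. (f a :: real poly))"
  by (induction xs) auto

lemma necessity:
  fixes k p :: nat and \<sigma> :: "real multiset" and A :: "real mat"
  assumes k2: "k \<ge> 2" and p1: "p \<ge> 1" and AS: "A \<in> sym_pattern (k + p) (lollipop_edge k p)"
    and sp: "is_spectrum \<sigma> A"
  shows "card (set_mset \<sigma>) \<ge> p + 2"
proof (rule ccontr)
  assume contra: "\<not> card (set_mset \<sigma>) \<ge> p + 2"
  define n where "n = k + p"
  have A: "A \<in> carrier_mat n n" and sym: "transpose_mat A = A"
    using AS unfolding sym_pattern_def n_def by auto
  obtain es where es: "mset es = \<sigma>" using ex_mset by blast
  have cp: "char_poly A = (\<Prod>a\<leftarrow>es. [:- a, 1:])"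
    using sp unfolding is_spectrum_def es[symmetric] pm_list .
  obtain B P Q :: "real mat" where sd: "schur_decomposition A es = (B,P,Q)" by (cases "schur_decomposition A es") auto
  have sw: "similar_mat_wit A B P Q" and ut: "upper_triangular B" and dg: "diag_mat B = es"
    using schur_decomposition[OF A cp sd] by auto
  have dA: "dim_row A = n" using A by auto
  have B: "B \<in> carrier_mat n n" and P: "P \<in> carrier_mat n n" and Q: "Q \<in> carrier_mat n n"
    and PQ: "P * Q = 1\<^sub>m n" and QP: "Q * P = 1\<^sub>m n" and AB: "A = P * B * Q"
    using sw unfolding similar_mat_wit_def Let_def dA by auto
  have "lprod A n es = P * lprod B n es * Q" by (rule lprod_sim[OF A B P Q PQ QP AB])
  also have "lprod B n es = 0\<^sub>m n n" by (rule lprod_ut[OF B ut dg])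
  finally have z: "lprod A n es = 0\<^sub>m n n" using P Q by simp
  define ds where "ds = remdups es"
  obtain rest where rest: "mset rest = mset es - mset ds" using ex_mset by blast
  have sub: "mset ds \<subseteq># mset es" unfolding ds_def by (rule mset_remdups_subset_eq)
  have "mset es = mset (ds @ rest)" using rest sub by (simp add: subset_mset.diff_add)
  hence "lprod A n (ds @ rest) = 0\<^sub>m n n" using z lprod_mset[OF A] by metis
  moreover have "set rest \<subseteq> set ds"
  proof
    fix x assume "x \<in> set rest"
    hence "x \<in># mset es - mset ds" using rest by (metis set_mset_mset)
    hence "x \<in># mset es" by (rule in_diffD)
    thus "x \<in> set ds" unfolding ds_def by simp
  qed
  ultimately have zd: "lprod A n ds = 0\<^sub>m n n" using lprod_reduce[OF A sym] by blast
  have q: "length ds = card (set_mset \<sigma>)" unfolding ds_def es[symmetric] by (simp add: length_remdups_card_conv)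
  define L where "L = ds @ replicate (p + 1 - length ds) 0"
  have lL: "length L = p + 1" unfolding L_def using q contra by simp
  have "lprod A n L = lprod A n ds * lprod A n (replicate (p + 1 - length ds) 0)"
    unfolding L_def by (rule lprod_append[OF A])
  also have "\<dots> = 0\<^sub>m n n" using zd left_mult_zero_mat[OF lprod_carrier[OF A]] by simp
  finally have zL: "lprod A n L $$ (0, n - 1) = 0" using k2 unfolding n_def by simp
  have "dst k (n - 1) = p + 1" using k2 p1 unfolding dst_def n_def by auto
  hence "lprod A n L $$ (0, n - 1) \<noteq> 0"
    using walk[OF k2 AS, of "n - 1" L] lL k2 unfolding n_def by simp
  thus False using zL by simp
qed

theorem corollary2p6:
  fixes k p :: nat and \<sigma> :: "real multiset"
  assumes "k \<ge> 2" and "p \<ge> 1" and "size \<sigma> = k + p"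
  shows "(\<exists>A \<in> sym_pattern (k + p) (lollipop_edge k p). is_spectrum \<sigma> A)
         \<longleftrightarrow> card (set_mset \<sigma>) \<ge> p + 2"
proof
  assume "\<exists>A \<in> sym_pattern (k + p) (lollipop_edge k p). is_spectrum \<sigma> A"
  thus "card (set_mset \<sigma>) \<ge> p + 2" using necessity assms by blast
next
  assume c: "card (set_mset \<sigma>) \<ge> p + 2"
  obtain \<Lambda> where L: "\<Lambda> \<subseteq> set_mset \<sigma>" "card \<Lambda> = p + 2"
    using obtain_subset_with_card_n[OF c] by blast
  have finL: "finite \<Lambda>" using L(1) finite_subset by blast
  define ls where "ls = sorted_list_of_set \<Lambda>"
  have dls: "distinct ls" and lls: "length ls = p + 2" and mls: "mset ls = mset_set \<Lambda>"
    unfolding ls_def using L finL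
    by (auto, metis mset_sorted_list_of_multiset sorted_list_of_mset_set)
  have subL: "mset ls \<subseteq># \<sigma>"
  proof -
    have "mset_set \<Lambda> \<subseteq># mset_set (set_mset \<sigma>)"
      using L(1) by (rule subset_imp_msubset_mset_set) simp
    also have "\<dots> \<subseteq># \<sigma>" by (rule mset_set_set_mset_msubset)
    finally show ?thesis using mls by simp
  qed
  obtain dl where dl: "mset dl = \<sigma> - mset ls" using ex_mset by blast
  have sig: "\<sigma> = mset dl + mset ls" using dl subL by (simp add: subset_mset.diff_add)
  have ldl: "length dl = k - 2"
  proof -
    have "size \<sigma> = length dl + length ls" using sig by (metis size_mset size_union)
    thus ?thesis using assms(3) lls by simp
  qed
  obtain M where M: "M \<in> sym_pattern (k + p) (lollipop_edge k p)"
    and cpM: "char_poly M = (\<Prod>x\<leftarrow>dl. [:- x, 1:]) * (\<Prod>x\<leftarrow>ls. [:- x, 1:])"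
    using construct[OF assms(1,2) ldl dls lls] by blast
  have "is_spectrum \<sigma> M"
    unfolding is_spectrum_def cpM sig by (simp add: pm_list[symmetric])
  thus "\<exists>A \<in> sym_pattern (k + p) (lollipop_edge k p). is_spectrum \<sigma> A" using M by blast
qed

end
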